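(* Suppose $\Sigma=\mathbb C_j$ and let $Z^{(-1)}(\alpha,z_0,z)$ and $\widehat Z^{(-1)}(\alpha,z_0,z)$ ($\alpha=1,j$) be Cauchy kernels in $\mathbb C_j$ of $\partial_{\overline z}W=aW+b\overline W$ and of $\partial_{\overline z}V=-aV-\overline b\,\overline V$ respectively, both behaving like $\mathcal O(|z|^{-1})$ as $z\to\infty$. Then $$\widehat Z^{(-1)}(1,z_0,z)=-\operatorname{Sc}Z^{(-1)}(1,z,z_0)+j\operatorname{Sc}Z^{(-1)}(j,z,z_0)$$ and $$\widehat Z^{(-1)}(j,z_0,z)=\operatorname{Vec}Z^{(-1)}(1,z,z_0)-j\operatorname{Vec}Z^{(-1)}(j,z,z_0).$$
   Context: Bicomplex numbers: $i,j$ imaginary units, $i^2=j^2=-1$, $ij=ji$; $\mathbb C_i=\{a+ib\}$, $\mathbb C_j=\{a+jb\}$ ($a,b$ real); $\mathbb B=\{u+jv:u,v\in\mathbb C_i\}$, $\operatorname{Sc}(u+jv)=u$, $\operatorname{Vec}(u+jv)=v$, $\overline{u+jv}=u-jv$. Plane $=\mathbb C_j$, $z=x+jy$, $\partial_{\overline z}=\frac12(\partial_x+j\partial_y)$. Norm on $\mathbb B$: writing $W^\pm=\operatorname{Sc}W\mp i\operatorname{Vec}W\in\mathbb C_i$, $|W|=\frac12(|W^+|+|W^-|)$. $Z=\mathcal O(|z|^{-1})$ as $z\to\infty$ means $|z|\,|Z(z)|$ is bounded for large $|z|$. Setting: $a,b$ are $\mathbb B$-valued Hölder continuous functions on $\mathbb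 C_j$; solutions of Vekua equations are $\mathbb B$-valued functions with continuous first partials satisfying the equation. A Cauchy kernel in $\Sigma$ of a Vekua equation is a family $Z^{(-1)}(1,z_0,z)$, $Z^{(-1)}(j,z_0,z)$, $z_0\in\Sigma$, both solutions in $z\in\Sigma\setminus\{z_0\}$, with $\lim_{z\to z_0}(z-z_0)Z^{(-1)}(\alpha,z_0,z)=\alpha$, $\alpha=1,j$. *)

theory Defs
  imports "HOL-Analysis.Analysis"
begin

text \<open>Bicomplex numbers W = u + j v with u, v in C_i are represented as pairs (u, v)
  of Isabelle complex numbers (whose imaginary unit plays the role of i).
  Points of the plane C_j, z = x + j y, are represented by the Isabelle complex
  number Complex x y (only its real structure is used).\<close>

type_synonym bicomplex = "complex \<times> complex"

definition Sc :: "bicomplex \<Rightarrow> complex" where "Sc W = fst W"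
definition Vec :: "bicomplex \<Rightarrow> complex" where "Vec W = snd W"

definition bone :: bicomplex where "bone = (1, 0)"
definition bj :: bicomplex where "bj = (0, 1)"

text \<open>(u1 + j v1)(u2 + j v2) = (u1 u2 - v1 v2) + j (u1 v2 + v1 u2)\<close>
definition bmul :: "bicomplex \<Rightarrow> bicomplex \<Rightarrow> bicomplex" where
  "bmul W V = (fst W * fst V - snd W * snd V, fst W * snd V + snd W * fst V)"

definition bconj :: "bicomplex \<Rightarrow> bicomplex" where "bconj W = (fst W, - snd W)"

definition pl :: "complex \<Rightarrow> bicomplex" where
  "pl z = (complex_of_real (Re z), complex_of_real (Im z))"

definition bnorm :: "bicomplex \<Rightarrow> real" where
  "bnorm W = (cmod (Sc W - \<i> * Vec W) + cmod (Sc W + \<i> * Vec W)) / 2"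

definition holder_continuous :: "(complex \<Rightarrow> bicomplex) \<Rightarrow> bool" where
  "holder_continuous f \<longleftrightarrow> (\<exists>\<alpha> C. 0 < \<alpha> \<and> \<alpha> \<le> 1 \<and>
      (\<forall>z w. bnorm (f z - f w) \<le> C * cmod (z - w) powr \<alpha>))"

text \<open>W is a solution of d_{zbar} W = a W + b conj(W) in the open set S:
  W has continuous first partial derivatives in S (partials in the x and y
  directions of the plane) and (1/2)(W_x + j W_y) = a W + b conj(W) there.\<close>
definition vekua_solution ::
  "(complex \<Rightarrow> bicomplex) \<Rightarrow> (complex \<Rightarrow> bicomplex) \<Rightarrow> complex set \<Rightarrow> (complex \<Rightarrow> bicomplex) \<Rightarrow> bool"
  where
  "vekua_solution a b S W \<longleftrightarrow> open S \<and>
     (\<exists>Wx Wy. continuous_on S Wx \<and> continuous_on S Wy \<and>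
       (\<forall>z\<in>S. ((\<lambda>t. W (z + complex_of_real t)) has_vector_derivative Wx z) (at 0) \<and>
               ((\<lambda>t. W (z + \<i> * complex_of_real t)) has_vector_derivative Wy z) (at 0) \<and>
               (1/2::real) *\<^sub>R (Wx z + bmul bj (Wy z)) = bmul (a z) (W z) + bmul (b z) (bconj (W z))))"

definition cauchy_kernel ::
  "(complex \<Rightarrow> bicomplex) \<Rightarrow> (complex \<Rightarrow> bicomplex) \<Rightarrow> complex set
     \<Rightarrow> (bicomplex \<Rightarrow> complex \<Rightarrow> complex \<Rightarrow> bicomplex) \<Rightarrow> bool" where
  "cauchy_kernel a b \<Sigma> Z \<longleftrightarrow>
     (\<forall>z0\<in>\<Sigma>. \<forall>\<alpha>\<in>{bone, bj}.
        vekua_solution a b (\<Sigma> - {z0}) (Z \<alpha> z0) \<and>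
        ((\<lambda>z. bmul (pl (z - z0)) (Z \<alpha> z0 z)) \<longlongrightarrow> \<alpha>) (at z0))"

definition decays_inv :: "(complex \<Rightarrow> bicomplex) \<Rightarrow> bool" where
  "decays_inv F \<longleftrightarrow> (\<exists>R M. \<forall>z. R \<le> cmod z \<longrightarrow> cmod z * bnorm (F z) \<le> M)"

end

theory Submission
  imports Defs
begin

definition om :: "(complex \<Rightarrow> bicomplex) \<Rightarrow> complex \<Rightarrow> complex \<Rightarrow> complex" where
  "om F p h = snd (F p) * of_real (Re h) + fst (F p) * of_real (Im h)"

lemma bl_vd: "bounded_linear L \<Longrightarrow> (f has_vector_derivative f') F \<Longrightarrow> ((\<lambda>x. L (f x)) has_vector_derivative L f') F"
proof -
  assume L: "bounded_linear L" and f: "(f has_vector_derivative f') F"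
  show ?thesis using bounded_linear.has_derivative[OF L f[unfolded has_vector_derivative_def]]
    by (simp add: has_vector_derivative_def linear_scale[OF bounded_linear.linear[OF L]])
qed

lemma bl_ofRe: "bounded_linear (\<lambda>z::complex. complex_of_real (Re z))"
  by (intro bounded_linear_compose[OF bounded_linear_of_real] bounded_linear_Re)
lemma bl_ofIm: "bounded_linear (\<lambda>z::complex. complex_of_real (Im z))"
  by (intro bounded_linear_compose[OF bounded_linear_of_real] bounded_linear_Im)

lemma om_vderiv:
  fixes G :: "real \<Rightarrow> bicomplex" and v :: "real \<Rightarrow> complex"
  assumes "(G has_vector_derivative G') (at t within S)" "(v has_vector_derivative v') (at t within S)"
  shows "((\<lambda>t. snd (G t) * of_real (Re (v t)) + fst (G t) * of_real (Im (v t))) has_vector_derivative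
     (snd G' * of_real (Re (v t)) + snd (G t) * of_real (Re v') + fst G' * of_real (Im (v t)) + fst (G t) * of_real (Im v'))) (at t within S)"
proof -
  have a: "((\<lambda>t. snd (G t)) has_vector_derivative snd G') (at t within S)"
    by (rule bl_vd[OF bounded_linear_snd assms(1)])
  have b: "((\<lambda>t. fst (G t)) has_vector_derivative fst G') (at t within S)"
    by (rule bl_vd[OF bounded_linear_fst assms(1)])
  have c: "((\<lambda>t. complex_of_real (Re (v t))) has_vector_derivative complex_of_real (Re v')) (at t within S)"
    by (rule bl_vd[OF bl_ofRe assms(2)])
  have d: "((\<lambda>t. complex_of_real (Im (v t))) has_vector_derivative complex_of_real (Im v')) (at t within S)"
    by (rule bl_vd[OF bl_ofIm assms(2)])
  show ?thesis
    using has_vector_derivative_add[OF has_vector_derivative_mult[OF a c] has_vector_derivative_mult[OF b d]]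
    by (simp add: algebra_simps)
qed

definition Jp :: "(complex \<Rightarrow> bicomplex) \<Rightarrow> complex \<Rightarrow> complex \<Rightarrow> complex" where
  "Jp F c p = integral {0..1} (\<lambda>s. om F ((1-s) *\<^sub>R p + s *\<^sub>R c) (c - p))"

lemma potential:
  fixes F Fx Fy :: "complex \<Rightarrow> bicomplex" and \<gamma> \<gamma>' :: "real \<Rightarrow> complex" and c :: complex
  assumes dF: "\<And>z. z \<in> U \<Longrightarrow> (F has_derivative (\<lambda>h. Re h *\<^sub>R Fx z + Im h *\<^sub>R Fy z)) (at z)"
    and cFx: "continuous_on U Fx" and cFy: "continuous_on U Fy"
    and cl: "\<And>z. z \<in> U \<Longrightarrow> fst (Fx z) = snd (Fy z)"
    and g: "\<And>t. t \<in> {t0..t1} \<Longrightarrow> (\<gamma> has_vector_derivative \<gamma>' t) (at t within {t0..t1})"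
    and cg': "continuous_on {t0..t1} \<gamma>'"
    and inU: "\<And>s t. s \<in> {0..1} \<Longrightarrow> t \<in> {t0..t1} \<Longrightarrow> (1-s) *\<^sub>R \<gamma> t + s *\<^sub>R c \<in> U"
    and t01: "t0 \<le> t1"
  shows "((\<lambda>t. om F (\<gamma> t) (\<gamma>' t)) has_integral (Jp F c (\<gamma> t0) - Jp F c (\<gamma> t1))) {t0..t1}"
proof -
  define H where "H s t = (1-s) *\<^sub>R \<gamma> t + s *\<^sub>R c" for s t
  define D where "D s t = (let h = H s t; A = c - \<gamma> t; B = (1-s) *\<^sub>R \<gamma>' t;
        dFt = Re B *\<^sub>R Fx h + Im B *\<^sub>R Fy h in
        snd dFt * of_real (Re A) + snd (F h) * of_real (Re (- \<gamma>' t)) + fst dFt * of_real (Im A)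
        + fst (F h) * of_real (Im (- \<gamma>' t)))" for s t
  have cF: "continuous_on U F"
    using dF by (meson continuous_at_imp_continuous_on has_derivative_continuous)
  have cg: "continuous_on {t0..t1} \<gamma>"
    using g by (rule continuous_on_vector_derivative)
  have HU: "s \<in> {0..1} \<Longrightarrow> t \<in> {t0..t1} \<Longrightarrow> H s t \<in> U" for s t
    using inU by (simp add: H_def)
  have step1: "((\<lambda>t. om F (H s t) (c - \<gamma> t)) has_vector_derivative D s t) (at t within {t0..t1})"
    if s: "s \<in> {0..1}" and t: "t \<in> {t0..t1}" for s t
  proof -
    have dH: "((\<lambda>t. H s t) has_vector_derivative (1-s) *\<^sub>R \<gamma>' t) (at t within {t0..t1})"
      unfolding H_def
      using has_vector_derivative_add[OF bl_vd[OF bounded_linear_scaleR_right g[OF t]] has_vector_derivative_const]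
      by simp
    have G: "((\<lambda>t. F (H s t)) has_vector_derivative (Re ((1-s) *\<^sub>R \<gamma>' t) *\<^sub>R Fx (H s t) + Im ((1-s) *\<^sub>R \<gamma>' t) *\<^sub>R Fy (H s t))) (at t within {t0..t1})"
      using vector_derivative_diff_chain_within[OF dH has_derivative_at_withinI[OF dF[OF HU[OF s t]]]]
      by (simp add: o_def)
    have v: "((\<lambda>t. c - \<gamma> t) has_vector_derivative - \<gamma>' t) (at t within {t0..t1})"
      using has_vector_derivative_diff[OF has_vector_derivative_const g[OF t]] by simp
    show ?thesis
      using om_vderiv[OF G v] unfolding om_def D_def Let_def by simp
  qed
  define R where "R = {t0..t1} \<times> cbox (0::real) 1"
  have cHp: "continuous_on R (\<lambda>p. H (snd p) (fst p))"
    unfolding H_def R_def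
    by (intro continuous_intros continuous_on_compose2[OF cg continuous_on_fst]) auto
  have HpU: "(\<lambda>p. H (snd p) (fst p)) ` R \<subseteq> U"
    using HU by (auto simp: R_def)
  have cgp: "continuous_on R (\<lambda>p. \<gamma> (fst p))"
    unfolding R_def by (rule continuous_on_compose2[OF cg continuous_on_fst]) auto
  have cg'p: "continuous_on R (\<lambda>p. \<gamma>' (fst p))"
    unfolding R_def by (rule continuous_on_compose2[OF cg' continuous_on_fst]) auto
  have cFp: "continuous_on R (\<lambda>p. F (H (snd p) (fst p)))"
    by (rule continuous_on_compose2[OF cF cHp HpU])
  have cFxp: "continuous_on R (\<lambda>p. Fx (H (snd p) (fst p)))"
    by (rule continuous_on_compose2[OF cFx cHp HpU])
  have cFyp: "continuous_on R (\<lambda>p. Fy (H (snd p) (fst p)))"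
    by (rule continuous_on_compose2[OF cFy cHp HpU])
  have cD: "continuous_on R (\<lambda>(t, s). D s t)"
    unfolding D_def Let_def split_beta
    by (intro continuous_intros cFp cFxp cFyp cgp cg'p)
  have step2: "((\<lambda>t. integral (cbox 0 1) (\<lambda>s. om F (H s t) (c - \<gamma> t))) has_vector_derivative
        integral (cbox 0 1) (\<lambda>s. D s t)) (at t within {t0..t1})" if t: "t \<in> {t0..t1}" for t
  proof (rule leibniz_rule_vector_derivative)
    show "((\<lambda>t. om F (H s t) (c - \<gamma> t)) has_vector_derivative D s x) (at x within {t0..t1})"
      if "x \<in> {t0..t1}" "s \<in> cbox 0 1" for x s using step1 that by simp
    show "continuous_on ({t0..t1} \<times> cbox 0 1) (\<lambda>(x, s). D s x)"
      using cD by (simp add: R_def)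
    show "(\<lambda>s. om F (H s x) (c - \<gamma> x)) integrable_on cbox 0 1" if x: "x \<in> {t0..t1}" for x
    proof (rule integrable_continuous)
      have c1: "continuous_on {0..1} (Pair x)" by (intro continuous_intros)
      have c2: "Pair x ` {0..1} \<subseteq> R" using x by (auto simp: R_def)
      have "continuous_on {0..1} (\<lambda>s. F (H s x))" using continuous_on_compose2[OF cFp c1 c2] by simp
      then show "continuous_on (cbox 0 1) (\<lambda>s. om F (H s x) (c - \<gamma> x))"
        unfolding om_def cbox_interval by (intro continuous_intros)
    qed
  qed (use t t01 in auto)
  have step3: "integral (cbox 0 1) (\<lambda>s. D s t) = - om F (\<gamma> t) (\<gamma>' t)" if t: "t \<in> {t0..t1}" for t
  proof -
    have "((\<lambda>s. D s t) has_integral (om F (H 1 t) ((1-1) *\<^sub>R \<gamma>' t) - om F (H 0 t) ((1-0) *\<^sub>R \<gamma>' t))) {0..1}"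
    proof (rule fundamental_theorem_of_calculus)
      fix s :: real assume s: "s \<in> {0..1}"
      have dH: "((\<lambda>s. H s t) has_vector_derivative (c - \<gamma> t)) (at s within {0..1})"
        unfolding H_def
        by (auto intro!: derivative_eq_intros simp: algebra_simps)
      have G: "((\<lambda>s. F (H s t)) has_vector_derivative (Re (c - \<gamma> t) *\<^sub>R Fx (H s t) + Im (c - \<gamma> t) *\<^sub>R Fy (H s t))) (at s within {0..1})"
        using vector_derivative_diff_chain_within[OF dH has_derivative_at_withinI[OF dF[OF HU[OF s t]]]]
        by (simp add: o_def)
      have v: "((\<lambda>s. (1-s) *\<^sub>R \<gamma>' t) has_vector_derivative - \<gamma>' t) (at s within {0..1})"
        by (auto intro!: derivative_eq_intros)
      have e: "D s t = snd (Re (c - \<gamma> t) *\<^sub>R Fx (H s t) + Im (c - \<gamma> t) *\<^sub>R Fy (H s t)) * of_real (Re ((1-s) *\<^sub>R \<gamma>' t))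
        + snd (F (H s t)) * of_real (Re (- \<gamma>' t))
        + fst (Re (c - \<gamma> t) *\<^sub>R Fx (H s t) + Im (c - \<gamma> t) *\<^sub>R Fy (H s t)) * of_real (Im ((1-s) *\<^sub>R \<gamma>' t))
        + fst (F (H s t)) * of_real (Im (- \<gamma>' t))"
        using cl[OF HU[OF s t]]
        unfolding D_def Let_def by (simp add: algebra_simps scaleR_conv_of_real)
      show "((\<lambda>s. om F (H s t) ((1-s) *\<^sub>R \<gamma>' t)) has_vector_derivative D s t) (at s within {0..1})"
        unfolding e om_def using om_vderiv[OF G v] by simp
    qed simp
    then show ?thesis
      by (simp add: om_def H_def integral_unique)
  qed
  have "((\<lambda>t. - om F (\<gamma> t) (\<gamma>' t)) has_integral
      (integral (cbox 0 1) (\<lambda>s. om F (H s t1) (c - \<gamma> t1)) - integral (cbox 0 1) (\<lambda>s. om F (H s t0) (c - \<gamma> t0)))) {t0..t1}"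
  proof (rule fundamental_theorem_of_calculus[OF t01])
    fix t assume t: "t \<in> {t0..t1}"
    show "((\<lambda>t. integral (cbox 0 1) (\<lambda>s. om F (H s t) (c - \<gamma> t))) has_vector_derivative - om F (\<gamma> t) (\<gamma>' t)) (at t within {t0..t1})"
      using step2[OF t] step3[OF t] by simp
  qed
  from has_integral_neg[OF this] show ?thesis
    by (simp add: Jp_def H_def)
qed

lemma avoid:
  fixes g :: complex and \<sigma> s :: real
  assumes "\<sigma> = 1 \<or> \<sigma> = -1" "0 \<le> \<sigma> * Im g" "g \<noteq> 0" "g \<noteq> 1" "s \<in> {0..1}"
  shows "(1-s) *\<^sub>R g + s *\<^sub>R (\<sigma> * \<i>) \<noteq> 0 \<and> (1-s) *\<^sub>R g + s *\<^sub>R (\<sigma> * \<i>) \<noteq> 1"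
proof (cases "s = 0")
  case True then show ?thesis using assms by simp
next
  case False
  then have s: "0 < s" "s \<le> 1" using assms(5) by auto
  have "\<sigma> * Im ((1-s) *\<^sub>R g + s *\<^sub>R (\<sigma> * \<i>)) = (1-s) * (\<sigma> * Im g) + s * (\<sigma> * \<sigma>)"
    by (simp add: algebra_simps)
  also have "\<sigma> * \<sigma> = 1" using assms(1) by auto
  finally have "\<sigma> * Im ((1-s) *\<^sub>R g + s *\<^sub>R (\<sigma> * \<i>)) > 0"
    using s assms(2) by (smt (verit) mult_nonneg_nonneg)
  then have "Im ((1-s) *\<^sub>R g + s *\<^sub>R (\<sigma> * \<i>)) \<noteq> 0" by (metis mult_zero_right order_less_irrefl)
  then show ?thesis by (metis one_complex.sel(2) zero_complex.sel(2))
qed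

lemma piece:
  fixes F Fx Fy :: "complex \<Rightarrow> bicomplex" and g g' :: "real \<Rightarrow> complex"
  assumes dF: "\<And>z. z \<in> U \<Longrightarrow> (F has_derivative (\<lambda>h. Re h *\<^sub>R Fx z + Im h *\<^sub>R Fy z)) (at z)"
    and cFx: "continuous_on U Fx" and cFy: "continuous_on U Fy"
    and cl: "\<And>z. z \<in> U \<Longrightarrow> fst (Fx z) = snd (Fy z)"
    and U: "U = - {z0, z0 + k}" and k: "k \<noteq> 0"
    and sg: "\<sigma> = 1 \<or> \<sigma> = -1"
    and g: "\<And>t. t \<in> {ta..tb} \<Longrightarrow> (g has_vector_derivative g' t) (at t within {ta..tb})"
    and cg': "continuous_on {ta..tb} g'"
    and gim: "\<And>t. t \<in> {ta..tb} \<Longrightarrow> 0 \<le> \<sigma> * Im (g t)"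
    and g01: "\<And>t. t \<in> {ta..tb} \<Longrightarrow> g t \<noteq> 0 \<and> g t \<noteq> 1"
    and tab: "ta \<le> tb"
  shows "((\<lambda>t. om F (z0 + k * g t) (k * g' t)) has_integral
      (Jp F (z0 + k * (\<sigma> * \<i>)) (z0 + k * g ta) - Jp F (z0 + k * (\<sigma> * \<i>)) (z0 + k * g tb))) {ta..tb}"
proof (rule potential[OF dF cFx cFy cl])
  show "((\<lambda>t. z0 + k * g t) has_vector_derivative k * g' t) (at t within {ta..tb})"
    if "t \<in> {ta..tb}" for t
    using has_vector_derivative_add[OF has_vector_derivative_const has_vector_derivative_mult_right[OF g[OF that]]]
    by simp
  show "continuous_on {ta..tb} (\<lambda>t. k * g' t)" by (intro continuous_intros cg')
  show "(1 - s) *\<^sub>R (z0 + k * g t) + s *\<^sub>R (z0 + k * (\<sigma> * \<i>)) \<in> U"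
    if "s \<in> {0..1}" "t \<in> {ta..tb}" for s t
  proof -
    have e: "(1 - s) *\<^sub>R (z0 + k * g t) + s *\<^sub>R (z0 + k * (\<sigma> * \<i>)) = z0 + k * ((1-s) *\<^sub>R g t + s *\<^sub>R (\<sigma> * \<i>))"
      by (simp add: scaleR_conv_of_real algebra_simps)
    from avoid[OF sg gim[OF that(2)] _ _ that(1)] g01[OF that(2)] k
    show ?thesis unfolding e U by auto
  qed
qed (use tab in auto)

lemma circ_piece:
  fixes F Fx Fy :: "complex \<Rightarrow> bicomplex" and r \<sigma> ta tb :: real and w z0 k :: complex
  assumes dF: "\<And>z. z \<in> U \<Longrightarrow> (F has_derivative (\<lambda>h. Re h *\<^sub>R Fx z + Im h *\<^sub>R Fy z)) (at z)"
    and cFx: "continuous_on U Fx" and cFy: "continuous_on U Fy"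
    and cl: "\<And>z. z \<in> U \<Longrightarrow> fst (Fx z) = snd (Fy z)"
    and U: "U = - {z0, z0 + k}" and k: "k \<noteq> 0"
    and sg: "\<sigma> = 1 \<or> \<sigma> = -1"
    and w: "w = 0 \<or> w = 1" and r: "0 < r" "r \<noteq> 1"
    and sn: "\<And>t. t \<in> {ta..tb} \<Longrightarrow> 0 \<le> \<sigma> * sin t"
    and tab: "ta \<le> tb"
  shows "((\<lambda>t. om F (z0 + k * (w + r * exp (\<i> * t))) (k * (r * (\<i> * exp (\<i> * t))))) has_integral
      (Jp F (z0 + k * (\<sigma> * \<i>)) (z0 + k * (w + r * exp (\<i> * ta))) - Jp F (z0 + k * (\<sigma> * \<i>)) (z0 + k * (w + r * exp (\<i> * tb))))) {ta..tb}"
proof (rule piece[OF dF cFx cFy cl U k sg, where g = "\<lambda>t. w + r * exp (\<i> * t)" and g' = "\<lambda>t. r * (\<i> * exp (\<i> * t))"])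
  show "((\<lambda>t. w + r * exp (\<i> * t)) has_vector_derivative r * (\<i> * exp (\<i> * t))) (at t within {ta..tb})" for t
  proof -
    have "((\<lambda>x. w + r * exp (\<i> * x)) has_field_derivative r * (\<i> * exp (\<i> * of_real t))) (at (of_real t))"
      by (auto intro!: derivative_eq_intros)
    from has_vector_derivative_real_field[OF this] show ?thesis .
  qed
  show "continuous_on {ta..tb} (\<lambda>t. complex_of_real r * (\<i> * exp (\<i> * complex_of_real t)))"
    by (intro continuous_intros)
  show "0 \<le> \<sigma> * Im (w + r * exp (\<i> * t))" if "t \<in> {ta..tb}" for t
  proof -
    have "0 \<le> r * (\<sigma> * sin t)" using r sn[OF that] by simp
    then show ?thesis using w by (auto simp: Im_exp algebra_simps)
  qed
  show "w + r * exp (\<i> * t) \<noteq> 0 \<and> w + r * exp (\<i> * t) \<noteq> 1" for t :: real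
  proof -
    have n: "norm (r * exp (\<i> * complex_of_real t)) = r" using r by (simp add: norm_mult)
    show ?thesis
    proof (intro conjI notI)
      assume "w + r * exp (\<i> * t) = 0"
      then have "r * exp (\<i> * t) = - w" by (simp add: add_eq_0_iff)
      then show False using n w r by auto
    next
      assume "w + r * exp (\<i> * t) = 1"
      then have "r * exp (\<i> * t) = 1 - w" by (simp add: algebra_simps)
      then show False using n w r by auto
    qed
  qed
qed (use tab in auto)

lemma seg_piece:
  fixes F Fx Fy :: "complex \<Rightarrow> bicomplex" and \<sigma> ta tb :: real and z0 k :: complex
  assumes dF: "\<And>z. z \<in> U \<Longrightarrow> (F has_derivative (\<lambda>h. Re h *\<^sub>R Fx z + Im h *\<^sub>R Fy z)) (at z)"
    and cFx: "continuous_on U Fx" and cFy: "continuous_on U Fy"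
    and cl: "\<And>z. z \<in> U \<Longrightarrow> fst (Fx z) = snd (Fy z)"
    and U: "U = - {z0, z0 + k}" and k: "k \<noteq> 0"
    and sg: "\<sigma> = 1 \<or> \<sigma> = -1"
    and nz: "0 \<notin> {ta..tb}" "1 \<notin> {ta..tb}"
    and tab: "ta \<le> tb"
  shows "((\<lambda>t. om F (z0 + k * complex_of_real t) k) has_integral
      (Jp F (z0 + k * (\<sigma> * \<i>)) (z0 + k * ta) - Jp F (z0 + k * (\<sigma> * \<i>)) (z0 + k * tb))) {ta..tb}"
proof -
  have "((\<lambda>t. om F (z0 + k * complex_of_real t) (k * 1)) has_integral
      (Jp F (z0 + k * (\<sigma> * \<i>)) (z0 + k * ta) - Jp F (z0 + k * (\<sigma> * \<i>)) (z0 + k * tb))) {ta..tb}"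
  proof (rule piece[OF dF cFx cFy cl U k sg, where g = "\<lambda>t. of_real t" and g' = "\<lambda>t. 1"])
    show "((\<lambda>t. complex_of_real t) has_vector_derivative 1) (at t within {ta..tb})" for t
      using has_vector_derivative_real_field[of "\<lambda>x. x" 1 t] by (simp add: DERIV_ident)
  qed (use nz tab in auto)
  then show ?thesis by simp
qed

definition CI :: "(complex \<Rightarrow> bicomplex) \<Rightarrow> complex \<Rightarrow> complex \<Rightarrow> complex \<Rightarrow> real \<Rightarrow> complex" where
  "CI F z0 k w r = integral {-pi..pi} (\<lambda>t. om F (z0 + k * (w + r * exp (\<i> * t))) (k * (r * (\<i> * exp (\<i> * t)))))"

lemma exp_ipi: "exp (\<i> * complex_of_real pi) = -1"
  using exp_pi_i by (simp add: mult.commute)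
lemma exp_impi: "exp (\<i> * complex_of_real (- pi)) = -1"
  using exp_ipi by (simp add: exp_minus)

lemma exp_impi2: "exp (- (\<i> * complex_of_real pi)) = -1"
  using exp_impi by simp

lemma green_two:
  fixes F Fx Fy :: "complex \<Rightarrow> bicomplex" and \<epsilon> R :: real
  assumes dF: "\<And>z. z \<in> U \<Longrightarrow> (F has_derivative (\<lambda>h. Re h *\<^sub>R Fx z + Im h *\<^sub>R Fy z)) (at z)"
    and cFx: "continuous_on U Fx" and cFy: "continuous_on U Fy"
    and cl: "\<And>z. z \<in> U \<Longrightarrow> fst (Fx z) = snd (Fy z)"
    and U: "U = - {z0, z0 + k}" and k: "k \<noteq> 0"
    and e: "0 < \<epsilon>" "\<epsilon> < 1/2" and R: "2 < R"
  shows "CI F z0 k 0 R = CI F z0 k 0 \<epsilon> + CI F z0 k 1 \<epsilon>"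
proof -
  note cp = circ_piece[OF dF cFx cFy cl U k]
  note sp = seg_piece[OF dF cFx cFy cl U k]
  define JU where "JU q = Jp F (z0 + k * (1 * \<i>)) (z0 + k * q)" for q
  define JL where "JL q = Jp F (z0 + k * (-1 * \<i>)) (z0 + k * q)" for q
  have up: "\<And>t. t \<in> {0..pi} \<Longrightarrow> 0 \<le> 1 * sin t" by (simp add: sin_ge_zero)
  have lo: "\<And>t. t \<in> {-pi..0} \<Longrightarrow> 0 \<le> -1 * sin t" 
    using sin_ge_zero[of "- t" for t] by auto
  have bigU: "((\<lambda>t. om F (z0 + k * (0 + R * exp (\<i> * t))) (k * (R * (\<i> * exp (\<i> * t))))) has_integral (JU R - JU (-R))) {0..pi}"
    using cp[of 1 0 R 0 pi] up R by (simp add: JU_def exp_ipi)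
  have bigL: "((\<lambda>t. om F (z0 + k * (0 + R * exp (\<i> * t))) (k * (R * (\<i> * exp (\<i> * t))))) has_integral (JL (-R) - JL R)) {-pi..0}"
    using cp[of "-1" 0 R "-pi" 0] lo R by (simp add: JL_def exp_impi exp_impi2)
  have c0U: "((\<lambda>t. om F (z0 + k * (0 + \<epsilon> * exp (\<i> * t))) (k * (\<epsilon> * (\<i> * exp (\<i> * t))))) has_integral (JU \<epsilon> - JU (-\<epsilon>))) {0..pi}"
    using cp[of 1 0 \<epsilon> 0 pi] up e by (simp add: JU_def exp_ipi)
  have c0L: "((\<lambda>t. om F (z0 + k * (0 + \<epsilon> * exp (\<i> * t))) (k * (\<epsilon> * (\<i> * exp (\<i> * t))))) has_integral (JL (-\<epsilon>) - JL \<epsilon>)) {-pi..0}"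
    using cp[of "-1" 0 \<epsilon> "-pi" 0] lo e by (simp add: JL_def exp_impi exp_impi2)
  have c1U: "((\<lambda>t. om F (z0 + k * (1 + \<epsilon> * exp (\<i> * t))) (k * (\<epsilon> * (\<i> * exp (\<i> * t))))) has_integral (JU (1 + \<epsilon>) - JU (1 - \<epsilon>))) {0..pi}"
    using cp[of 1 1 \<epsilon> 0 pi] up e by (simp add: JU_def exp_ipi)
  have c1L: "((\<lambda>t. om F (z0 + k * (1 + \<epsilon> * exp (\<i> * t))) (k * (\<epsilon> * (\<i> * exp (\<i> * t))))) has_integral (JL (1 - \<epsilon>) - JL (1 + \<epsilon>))) {-pi..0}"
    using cp[of "-1" 1 \<epsilon> "-pi" 0] lo e by (simp add: JL_def exp_impi exp_impi2)
  have sAU: "((\<lambda>t. om F (z0 + k * t) k) has_integral (JU (1 + \<epsilon>) - JU R)) {1+\<epsilon>..R}"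
    using sp[of 1 "1+\<epsilon>" R] e R by (simp add: JU_def)
  have sAL: "((\<lambda>t. om F (z0 + k * t) k) has_integral (JL (1 + \<epsilon>) - JL R)) {1+\<epsilon>..R}"
    using sp[of "-1" "1+\<epsilon>" R] e R by (simp add: JL_def)
  have sBU: "((\<lambda>t. om F (z0 + k * t) k) has_integral (JU \<epsilon> - JU (1 - \<epsilon>))) {\<epsilon>..1-\<epsilon>}"
    using sp[of 1 "\<epsilon>" "1-\<epsilon>"] e by (simp add: JU_def)
  have sBL: "((\<lambda>t. om F (z0 + k * t) k) has_integral (JL \<epsilon> - JL (1 - \<epsilon>))) {\<epsilon>..1-\<epsilon>}"
    using sp[of "-1" "\<epsilon>" "1-\<epsilon>"] e by (simp add: JL_def)
  have sCU: "((\<lambda>t. om F (z0 + k * t) k) has_integral (JU (-R) - JU (-\<epsilon>))) {-R..-\<epsilon>}"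
    using sp[of 1 "-R" "-\<epsilon>"] e R by (simp add: JU_def)
  have sCL: "((\<lambda>t. om F (z0 + k * t) k) has_integral (JL (-R) - JL (-\<epsilon>))) {-R..-\<epsilon>}"
    using sp[of "-1" "-R" "-\<epsilon>"] e R by (simp add: JL_def)
  have eA: "JU (1 + \<epsilon>) - JU R = JL (1 + \<epsilon>) - JL R" using has_integral_unique[OF sAU sAL] .
  have eB: "JU \<epsilon> - JU (1 - \<epsilon>) = JL \<epsilon> - JL (1 - \<epsilon>)" using has_integral_unique[OF sBU sBL] .
  have eC: "JU (-R) - JU (-\<epsilon>) = JL (-R) - JL (-\<epsilon>)" using has_integral_unique[OF sCU sCL] .
  have big: "((\<lambda>t. om F (z0 + k * (0 + R * exp (\<i> * t))) (k * (R * (\<i> * exp (\<i> * t))))) has_integral ((JL (-R) - JL R) + (JU R - JU (-R)))) {-pi..pi}"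
    by (rule has_integral_combine[OF _ _ bigL bigU]) auto
  have c0: "((\<lambda>t. om F (z0 + k * (0 + \<epsilon> * exp (\<i> * t))) (k * (\<epsilon> * (\<i> * exp (\<i> * t))))) has_integral ((JL (-\<epsilon>) - JL \<epsilon>) + (JU \<epsilon> - JU (-\<epsilon>)))) {-pi..pi}"
    by (rule has_integral_combine[OF _ _ c0L c0U]) auto
  have c1: "((\<lambda>t. om F (z0 + k * (1 + \<epsilon> * exp (\<i> * t))) (k * (\<epsilon> * (\<i> * exp (\<i> * t))))) has_integral ((JL (1 - \<epsilon>) - JL (1 + \<epsilon>)) + (JU (1 + \<epsilon>) - JU (1 - \<epsilon>)))) {-pi..pi}"
    by (rule has_integral_combine[OF _ _ c1L c1U]) auto
  have i1: "CI F z0 k 0 R = (JL (-R) - JL R) + (JU R - JU (-R))"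
    unfolding CI_def by (rule integral_unique[OF big])
  have i2: "CI F z0 k 0 \<epsilon> = (JL (-\<epsilon>) - JL \<epsilon>) + (JU \<epsilon> - JU (-\<epsilon>))"
    unfolding CI_def by (rule integral_unique[OF c0])
  have i3: "CI F z0 k 1 \<epsilon> = (JL (1 - \<epsilon>) - JL (1 + \<epsilon>)) + (JU (1 + \<epsilon>) - JU (1 - \<epsilon>))"
    unfolding CI_def by (rule integral_unique[OF c1])
  have eA': "JU (1 + \<epsilon>) = JL (1 + \<epsilon>) - JL R + JU R" using eA by (simp add: algebra_simps)
  have eB': "JU \<epsilon> = JL \<epsilon> - JL (1 - \<epsilon>) + JU (1 - \<epsilon>)" using eB by (simp add: algebra_simps)
  have eC': "JU (-R) = JL (-R) - JL (-\<epsilon>) + JU (-\<epsilon>)" using eC by (simp add: algebra_simps)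
  show ?thesis
    unfolding i1 i2 i3 eA' eB' eC' by (simp add: algebra_simps)
qed

lemma om_iq: "om F p (\<i> * q) = fst (bmul (pl q) (F p))"
  by (simp add: om_def bmul_def pl_def algebra_simps)

lemma norm_fst_le': "norm (fst X) \<le> norm X" for X :: "'a::real_normed_vector \<times> 'b::real_normed_vector"
  by (metis fst_conv norm_Pair real_sqrt_sum_squares_ge1 surj_pair)
lemma norm_snd_le': "norm (snd X) \<le> norm X" for X :: "'a::real_normed_vector \<times> 'b::real_normed_vector"
  by (metis snd_conv norm_Pair real_sqrt_sum_squares_ge2 surj_pair)

lemma norm_bmul: "norm (bmul X Y) \<le> 4 * norm X * norm Y"
proof -
  obtain x1 x2 where X: "X = (x1, x2)" by fastforce
  obtain y1 y2 where Y: "Y = (y1, y2)" by fastforce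
  have n1: "norm x1 \<le> norm X" "norm x2 \<le> norm X" using norm_fst_le'[of X] norm_snd_le'[of X] X by auto
  have n2: "norm y1 \<le> norm Y" "norm y2 \<le> norm Y" using norm_fst_le'[of Y] norm_snd_le'[of Y] Y by auto
  have "norm (bmul X Y) \<le> norm (x1*y1 - x2*y2) + norm (x1*y2 + x2*y1)"
    unfolding bmul_def X Y by (simp add: norm_Pair_le)
  also have "\<dots> \<le> (norm x1 * norm y1 + norm x2 * norm y2) + (norm x1 * norm y2 + norm x2 * norm y1)"
    by (intro add_mono order_trans[OF norm_triangle_ineq4] order_trans[OF norm_triangle_ineq])
       (auto simp: norm_mult)
  also have "\<dots> \<le> 4 * norm X * norm Y"
  proof -
    have "norm x1 * norm y1 \<le> norm X * norm Y" by (intro mult_mono n1 n2) auto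
    moreover have "norm x2 * norm y2 \<le> norm X * norm Y" by (intro mult_mono n1 n2) auto
    moreover have "norm x1 * norm y2 \<le> norm X * norm Y" by (intro mult_mono n1 n2) auto
    moreover have "norm x2 * norm y1 \<le> norm X * norm Y" by (intro mult_mono n1 n2) auto
    ultimately show ?thesis by linarith
  qed
  finally show ?thesis .
qed

lemma norm_pl: "norm (pl q) = cmod q"
  by (simp add: pl_def norm_Pair cmod_def)

lemma norm_le_bnorm: "norm W \<le> 2 * bnorm W"
proof -
  obtain u v where W: "W = (u, v)" by fastforce
  have "cmod (2*u) \<le> cmod (u - \<i> * v) + cmod (u + \<i> * v)"
    using norm_triangle_ineq[of "u - \<i> * v" "u + \<i> * v"] by simp
  moreover have "cmod (2*(\<i> * v)) \<le> cmod (u - \<i> * v) + cmod (u + \<i> * v)"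
    using norm_triangle_ineq4[of "u + \<i> * v" "u - \<i> * v"] by (simp add: norm_minus_commute algebra_simps)
  moreover have "norm W \<le> cmod u + cmod v" unfolding W by (rule norm_Pair_le)
  ultimately show ?thesis unfolding bnorm_def Sc_def Vec_def W by (simp add: norm_mult)
qed

lemma CI_cont:
  assumes cF: "continuous_on U F" and inU: "\<And>t::real. z0 + k * (w + r * exp (\<i> * complex_of_real t)) \<in> U"
  shows "(\<lambda>t. om F (z0 + k * (w + r * exp (\<i> * t))) (k * (r * (\<i> * exp (\<i> * t))))) integrable_on {-pi..pi}"
proof -
  have "continuous_on {-pi..pi} (\<lambda>t. F (z0 + k * (w + r * exp (\<i> * complex_of_real t))))"
    by (rule continuous_on_compose2[OF cF]) (auto intro!: continuous_intros inU)
  then show ?thesis unfolding om_def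
    by (intro integrable_continuous_real continuous_intros)
qed

lemma residue_lim:
  fixes F :: "complex \<Rightarrow> bicomplex" and c :: bicomplex
  assumes lim: "((\<lambda>p. bmul (pl (p - (z0 + k * w))) (F p)) \<longlongrightarrow> c) (at (z0 + k * w))"
    and cF: "continuous_on U F"
    and inU: "\<And>(r::real) (t::real). 0 < r \<Longrightarrow> r < (1::real)/2 \<Longrightarrow> z0 + k * (w + r * exp (\<i> * complex_of_real t)) \<in> U"
    and k: "k \<noteq> 0" and d: "0 < \<delta>"
  shows "\<exists>e0>0. \<forall>r. 0 < r \<and> r < e0 \<longrightarrow> cmod (CI F z0 k w r - 2 * complex_of_real pi * fst c) \<le> 2 * pi * \<delta>"
proof -
  from tendstoD[OF lim d] obtain d0 where d0: "d0 > 0"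
    and hd: "\<And>p. p \<noteq> z0 + k * w \<Longrightarrow> dist p (z0 + k * w) < d0 \<Longrightarrow> dist (bmul (pl (p - (z0 + k * w))) (F p)) c < \<delta>"
    unfolding eventually_at by auto
  define e0 where "e0 = min (1/4) (d0 / cmod k)"
  have e0: "e0 > 0" using d0 k by (simp add: e0_def)
  show ?thesis
  proof (intro exI[of _ e0] conjI allI impI e0)
    fix r :: real assume r: "0 < r \<and> r < e0"
    then have r2: "r < 1/2" "0 < r" by (auto simp: e0_def)
    have rk: "r * cmod k < d0" using r k d0 by (auto simp: e0_def field_simps)
    define f where "f t = om F (z0 + k * (w + r * exp (\<i> * t))) (k * (r * (\<i> * exp (\<i> * t))))" for t :: real
    have int: "f integrable_on {-pi..pi}"
      unfolding f_def by (rule CI_cont[OF cF inU[OF r2(2) r2(1)]])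
    have hi: "((\<lambda>t. f t - fst c) has_integral (CI F z0 k w r - 2 * complex_of_real pi * fst c)) {-pi..pi}"
    proof -
      have "((\<lambda>t::real. fst c) has_integral (2 * complex_of_real pi * fst c)) {-pi..pi}"
        using has_integral_const_real[of "fst c" "-pi" pi] by (simp add: scaleR_conv_of_real)
      from has_integral_diff[OF integrable_integral[OF int] this]
      show ?thesis by (simp add: CI_def f_def[abs_def])
    qed
    have bd: "norm (f t - fst c) \<le> \<delta>" for t
    proof -
      define p where "p = z0 + k * (w + r * exp (\<i> * t))"
      have pq: "p - (z0 + k * w) = k * (r * exp (\<i> * t))" by (simp add: p_def algebra_simps)
      have np: "cmod (p - (z0 + k * w)) = r * cmod k" unfolding pq using r2 by (simp add: norm_mult)
      have ft: "f t = fst (bmul (pl (p - (z0 + k * w))) (F p))"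
        unfolding f_def p_def[symmetric] pq om_iq[symmetric] by (simp add: algebra_simps)
      have "p \<noteq> z0 + k * w" using np r2 k by auto
      moreover have "dist p (z0 + k * w) < d0" using np rk by (simp add: dist_norm)
      ultimately have "dist (bmul (pl (p - (z0 + k * w))) (F p)) c < \<delta>" by (rule hd)
      then have "norm (fst (bmul (pl (p - (z0 + k * w))) (F p) - c)) < \<delta>"
        using norm_fst_le'[of "bmul (pl (p - (z0 + k * w))) (F p) - c"] by (simp add: dist_norm)
      then show ?thesis by (simp add: ft)
    qed
    have "norm (CI F z0 k w r - 2 * complex_of_real pi * fst c) \<le> \<delta> * Henstock_Kurzweil_Integration.content {-pi..pi}"
      by (rule has_integral_bound_real[OF _ _ hi, of _ "{}"]) (use d bd in auto)
    then show "cmod (CI F z0 k w r - 2 * complex_of_real pi * fst c) \<le> 2 * pi * \<delta>" by (simp add: mult.commute)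
  qed
qed

lemma big_lim:
  fixes F :: "complex \<Rightarrow> bicomplex"
  assumes cF: "continuous_on U F"
    and inU: "\<And>(r::real) (t::real). (2::real) < r \<Longrightarrow> z0 + k * (0 + r * exp (\<i> * complex_of_real t)) \<in> U"
    and dec: "\<And>p. Rd \<le> cmod p \<Longrightarrow> (cmod p)^2 * norm (F p) \<le> M"
    and k: "k \<noteq> 0" and d: "0 < \<delta>"
  shows "\<exists>R0. \<forall>r. R0 < r \<longrightarrow> cmod (CI F z0 k 0 r) \<le> \<delta>"
proof -
  define M' where "M' = max M 0"
  have M': "M' \<ge> 0" by (simp add: M'_def)
  have dec': "norm (F p) \<le> M' / (cmod p)^2" if "Rd \<le> cmod p" "p \<noteq> 0" for p
    using dec[OF that(1)] that(2) by (simp add: M'_def field_simps)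
  define R0 where "R0 = max (max 2 (2 * cmod z0 / cmod k)) (max (2 * \<bar>Rd\<bar> / cmod k) (32 * pi * M' / (cmod k * \<delta>)))"
  have kp: "cmod k > 0" using k by simp
  show ?thesis
  proof (intro exI[of _ R0] allI impI)
    fix r assume r: "R0 < r"
    have r2: "2 < r" using r by (simp add: R0_def)
    have rz: "2 * cmod z0 < cmod k * r" using r kp by (simp add: R0_def field_simps)
    have rd: "2 * \<bar>Rd\<bar> < cmod k * r" using r kp by (simp add: R0_def field_simps)
    have rM: "32 * pi * M' / (cmod k * \<delta>) < r" using r by (simp add: R0_def)
    then have rM': "32 * pi * M' < r * (cmod k * \<delta>)" using kp d by (simp add: field_simps)
    define f where "f t = om F (z0 + k * (0 + r * exp (\<i> * t))) (k * (r * (\<i> * exp (\<i> * t))))" for t :: real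
    have int: "f integrable_on {-pi..pi}"
      unfolding f_def by (rule CI_cont[OF cF inU[OF r2]])
    have bd: "norm (f t) \<le> 16 * M' / (cmod k * r)" for t
    proof -
      define q where "q = k * (r * exp (\<i> * t))"
      define p where "p = z0 + q"
      have nq: "cmod q = cmod k * r" using r2 by (simp add: q_def norm_mult)
      have np: "cmod k * r / 2 \<le> cmod p"
        using norm_triangle_ineq2[of q "- z0"] rz nq by (simp add: p_def algebra_simps)
      have pos: "0 < cmod k * r / 2" using kp r2 by simp
      have ft: "f t = fst (bmul (pl q) (F p))"
        unfolding f_def p_def q_def om_iq[symmetric] by (simp add: algebra_simps)
      have "norm (f t) \<le> 4 * norm (pl q) * norm (F p)"
        unfolding ft using norm_fst_le' norm_bmul order_trans by blast
      also have "\<dots> = 4 * (cmod k * r) * norm (F p)" by (simp add: norm_pl nq)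
      also have "norm (F p) \<le> M' / (cmod p)^2"
      proof (rule dec')
        show "Rd \<le> cmod p" using np rd abs_ge_self[of Rd] by linarith
        show "p \<noteq> 0" using np pos by auto
      qed
      also have "M' / (cmod p)^2 \<le> M' / (cmod k * r / 2)^2"
        using np pos M' by (intro divide_left_mono power_mono mult_pos_pos) auto
      finally have "norm (f t) \<le> 4 * (cmod k * r) * (M' / (cmod k * r / 2)^2)"
        using kp r2 by (simp add: mult_left_mono)
      also have "\<dots> = 16 * M' / (cmod k * r)"
        using kp r2 by (simp add: field_simps power2_eq_square)
      finally show ?thesis .
    qed
    have "norm (CI F z0 k 0 r) \<le> 16 * M' / (cmod k * r) * Henstock_Kurzweil_Integration.content {-pi..pi}"
      unfolding CI_def f_def[symmetric]
      by (rule has_integral_bound_real[OF _ _ integrable_integral[OF int], of _ "{}"])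
         (use M' kp r2 bd in auto)
    also have "\<dots> = 32 * pi * M' / (cmod k * r)" by simp
    also have "\<dots> \<le> \<delta>" using rM' kp r2 by (simp add: field_simps)
    finally show "cmod (CI F z0 k 0 r) \<le> \<delta>" .
  qed
qed

lemma inU_gen:
  fixes r :: real
  assumes k: "k \<noteq> 0" and w: "w = 0 \<or> w = 1" and r: "0 < r" "r \<noteq> 1"
  shows "z0 + k * (w + r * exp (\<i> * complex_of_real t)) \<in> - {z0, z0 + k}"
proof -
  have n: "norm (r * exp (\<i> * complex_of_real t)) = r" using r by (simp add: norm_mult)
  have "w + r * exp (\<i> * t) \<noteq> 0"
  proof
    assume "w + r * exp (\<i> * t) = 0"
    then have "r * exp (\<i> * t) = - w" by (simp add: add_eq_0_iff)
    then show False using n w r by auto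
  qed
  moreover have "w + r * exp (\<i> * t) \<noteq> 1"
  proof
    assume "w + r * exp (\<i> * t) = 1"
    then have "r * exp (\<i> * t) = 1 - w" by (simp add: algebra_simps)
    then show False using n w r by auto
  qed
  ultimately show ?thesis using k by auto
qed

theorem two_poles:
  fixes F Fx Fy :: "complex \<Rightarrow> bicomplex" and c0 c1 :: bicomplex
  assumes dF: "\<And>z. z \<noteq> z0 \<Longrightarrow> z \<noteq> z1 \<Longrightarrow> (F has_derivative (\<lambda>h. Re h *\<^sub>R Fx z + Im h *\<^sub>R Fy z)) (at z)"
    and cFx: "continuous_on (- {z0, z1}) Fx" and cFy: "continuous_on (- {z0, z1}) Fy"
    and cl: "\<And>z. z \<noteq> z0 \<Longrightarrow> z \<noteq> z1 \<Longrightarrow> fst (Fx z) = snd (Fy z)"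
    and lim0: "((\<lambda>p. bmul (pl (p - z0)) (F p)) \<longlongrightarrow> c0) (at z0)"
    and lim1: "((\<lambda>p. bmul (pl (p - z1)) (F p)) \<longlongrightarrow> c1) (at z1)"
    and dec: "\<And>p. Rd \<le> cmod p \<Longrightarrow> (cmod p)^2 * norm (F p) \<le> M"
    and ne: "z0 \<noteq> z1"
  shows "fst c0 + fst c1 = 0"
proof (rule ccontr)
  assume x: "fst c0 + fst c1 \<noteq> 0"
  define k where "k = z1 - z0"
  have k: "k \<noteq> 0" using ne by (simp add: k_def)
  have z1: "z1 = z0 + k" by (simp add: k_def)
  define U where "U = - {z0, z0 + k}"
  have dF': "\<And>z. z \<in> U \<Longrightarrow> (F has_derivative (\<lambda>h. Re h *\<^sub>R Fx z + Im h *\<^sub>R Fy z)) (at z)"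
    using dF by (auto simp: U_def z1)
  have cl': "\<And>z. z \<in> U \<Longrightarrow> fst (Fx z) = snd (Fy z)" using cl by (auto simp: U_def z1)
  have cFx': "continuous_on U Fx" and cFy': "continuous_on U Fy" using cFx cFy by (auto simp: U_def z1)
  have cF: "continuous_on U F"
    using dF' by (meson continuous_at_imp_continuous_on has_derivative_continuous)
  define \<delta> where "\<delta> = cmod (fst c0 + fst c1) / 4"
  have d: "0 < \<delta>" using x by (simp add: \<delta>_def)
  have lim0': "((\<lambda>p. bmul (pl (p - (z0 + k * 0))) (F p)) \<longlongrightarrow> c0) (at (z0 + k * 0))"
    using lim0 by simp
  have lim1': "((\<lambda>p. bmul (pl (p - (z0 + k * 1))) (F p)) \<longlongrightarrow> c1) (at (z0 + k * 1))"
    using lim1 by (simp add: z1)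
  have in0: "z0 + k * (0 + r * exp (\<i> * complex_of_real t)) \<in> U" if "0 < r" "r < (1::real)/2" for r t :: real
    unfolding U_def by (rule inU_gen[OF k]) (use that in auto)
  have in1: "z0 + k * (1 + r * exp (\<i> * complex_of_real t)) \<in> U" if "0 < r" "r < (1::real)/2" for r t :: real
    unfolding U_def by (rule inU_gen[OF k]) (use that in auto)
  have inB: "z0 + k * (0 + r * exp (\<i> * complex_of_real t)) \<in> U" if "(2::real) < r" for r t :: real
    unfolding U_def by (rule inU_gen[OF k]) (use that in auto)
  obtain e0 where e0: "e0 > 0" "\<And>r. 0 < r \<and> r < e0 \<Longrightarrow> cmod (CI F z0 k 0 r - 2 * complex_of_real pi * fst c0) \<le> 2 * pi * \<delta>"
    using residue_lim[OF lim0' cF in0 k d] by blast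
  obtain e1 where e1: "e1 > 0" "\<And>r. 0 < r \<and> r < e1 \<Longrightarrow> cmod (CI F z0 k 1 r - 2 * complex_of_real pi * fst c1) \<le> 2 * pi * \<delta>"
    using residue_lim[OF lim1' cF in1 k d] by blast
  obtain R0 where R0: "\<And>r. R0 < r \<Longrightarrow> cmod (CI F z0 k 0 r) \<le> \<delta>"
    using big_lim[OF cF inB dec k d] by blast
  define \<epsilon> where "\<epsilon> = min (1/4) (min e0 e1 / 2)"
  have \<epsilon>: "0 < \<epsilon>" "\<epsilon> < 1/2" "\<epsilon> < e0" "\<epsilon> < e1" using e0 e1 by (auto simp: \<epsilon>_def)
  define R where "R = max R0 2 + 1"
  have R: "2 < R" "R0 < R" by (auto simp: R_def)
  have g: "CI F z0 k 0 R = CI F z0 k 0 \<epsilon> + CI F z0 k 1 \<epsilon>"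
    by (rule green_two[OF dF' cFx' cFy' cl' U_def k \<epsilon>(1,2) R(1)])
  define A where "A = CI F z0 k 0 \<epsilon> - 2 * complex_of_real pi * fst c0"
  define B where "B = CI F z0 k 1 \<epsilon> - 2 * complex_of_real pi * fst c1"
  have eq: "2 * complex_of_real pi * (fst c0 + fst c1) = CI F z0 k 0 R - A - B"
    unfolding g A_def B_def by (simp add: algebra_simps)
  have "cmod (2 * complex_of_real pi * (fst c0 + fst c1)) \<le> cmod A + cmod B + cmod (CI F z0 k 0 R)"
    unfolding eq using norm_triangle_ineq4[of "CI F z0 k 0 R - A" B] norm_triangle_ineq4[of "CI F z0 k 0 R" A] by simp
  also have "\<dots> \<le> 2 * pi * \<delta> + 2 * pi * \<delta> + \<delta>"
    using e0(2)[of \<epsilon>] e1(2)[of \<epsilon>] R0[OF R(2)] \<epsilon> unfolding A_def B_def by (intro add_mono) auto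
  finally have "2 * pi * cmod (fst c0 + fst c1) \<le> 4 * pi * \<delta> + \<delta>" by (simp add: norm_mult)
  then have h: "2 * pi * cmod (fst c0 + fst c1) \<le> pi * cmod (fst c0 + fst c1) + cmod (fst c0 + fst c1) / 4"
    by (simp add: \<delta>_def)
  have X: "cmod (fst c0 + fst c1) > 0" using x by simp
  have "1 * cmod (fst c0 + fst c1) < pi * cmod (fst c0 + fst c1)"
    using mult_strict_right_mono[OF _ X, of 1 pi] pi_gt3 by simp
  then show False using h X by linarith
qed

lemma partials_deriv:
  fixes W Wx Wy :: "complex \<Rightarrow> bicomplex"
  assumes S: "open S" and z: "z \<in> S"
    and cWy: "continuous_on S Wy"
    and dx: "((\<lambda>t. W (z + complex_of_real t)) has_vector_derivative Wx z) (at 0)"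
    and dy: "\<And>w. w \<in> S \<Longrightarrow> ((\<lambda>t. W (w + \<i> * complex_of_real t)) has_vector_derivative Wy w) (at 0)"
  shows "(W has_derivative (\<lambda>h. Re h *\<^sub>R Wx z + Im h *\<^sub>R Wy z)) (at z)"
proof -
  obtain \<rho> where \<rho>: "\<rho> > 0" "ball z \<rho> \<subseteq> S" using S z open_contains_ball by blast
  define x0 where "x0 = Re z"
  define y0 where "y0 = Im z"
  define X where "X = ball x0 (\<rho>/2)"
  define Y where "Y = ball y0 (\<rho>/2)"
  define f where "f x y = W (Complex x y)" for x y
  have XY: "Complex x y \<in> S" if "x \<in> X" "y \<in> Y" for x y
  proof -
    have "dist z (Complex x y) \<le> \<bar>x0 - x\<bar> + \<bar>y0 - y\<bar>"
      unfolding dist_norm x0_def y0_def using cmod_le[of "z - Complex x y"] by simp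
    also have "\<dots> < \<rho>" using that by (simp add: X_def Y_def dist_real_def)
    finally show ?thesis using \<rho> by auto
  qed
  have fx: "((\<lambda>x. f x y0) has_derivative (\<lambda>t. t *\<^sub>R Wx z)) (at x0 within X)"
  proof -
    have e: "(\<lambda>x. f x y0) = (\<lambda>x. W (z + complex_of_real (x - x0)))"
      unfolding f_def x0_def y0_def by (rule ext, rule arg_cong[where f = W]) (simp add: complex_eq_iff)
    have "((\<lambda>x. x - x0) has_derivative (\<lambda>t. t)) (at x0 within X)"
      by (auto intro!: derivative_eq_intros)
    from has_derivative_compose[OF this, of "\<lambda>t. W (z + complex_of_real t)"] dx
    show ?thesis unfolding e by (simp add: has_vector_derivative_def)
  qed
  have fy: "((\<lambda>y. f x y) has_derivative blinfun_apply (blinfun_scaleR_left (Wy (Complex x y)))) (at y within Y)"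
    if "x \<in> X" "y \<in> Y" for x y
  proof -
    have e: "(\<lambda>y'. f x y') = (\<lambda>y'. W (Complex x y + \<i> * complex_of_real (y' - y)))"
      unfolding f_def by (rule ext, rule arg_cong[where f = W]) (simp add: complex_eq_iff)
    have "((\<lambda>y'. y' - y) has_derivative (\<lambda>t. t)) (at y within Y)"
      by (auto intro!: derivative_eq_intros)
    from has_derivative_compose[OF this, of "\<lambda>t. W (Complex x y + \<i> * complex_of_real t)"] dy[OF XY[OF that]]
    show ?thesis unfolding e by (simp add: has_vector_derivative_def blinfun_scaleR_left.rep_eq)
  qed
  have cont: "continuous (at (x0, y0) within X \<times> Y) (\<lambda>(x, y). blinfun_scaleR_left (Wy (Complex x y)))"
  proof -
    have "isCont Wy z" using cWy \<rho> z S by (simp add: continuous_on_eq_continuous_at)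
    then have "isCont Wy (Complex (fst (x0, y0)) (snd (x0, y0)))" by (simp add: x0_def y0_def)
    moreover have c: "isCont (\<lambda>p::real\<times>real. Complex (fst p) (snd p)) (x0, y0)"
      unfolding Complex_eq by (intro continuous_intros)
    ultimately have "isCont (\<lambda>p. Wy (Complex (fst p) (snd p))) (x0, y0)"
      using isCont_o2[OF c] by simp
    then have A: "isCont (\<lambda>p. blinfun_scaleR_left (Wy (Complex (fst p) (snd p)))) (x0, y0)"
      by (intro continuous_intros)
    have eq: "(\<lambda>(x, y). blinfun_scaleR_left (Wy (Complex x y))) = (\<lambda>p. blinfun_scaleR_left (Wy (Complex (fst p) (snd p))))"
      by (auto simp: fun_eq_iff split: prod.splits)
    show ?thesis unfolding eq using A by (rule continuous_at_imp_continuous_within)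
  qed
  have "((\<lambda>(x, y). f x y) has_derivative (\<lambda>(tx, ty). tx *\<^sub>R Wx z + blinfun_scaleR_left (Wy (Complex x0 y0)) ty)) (at (x0, y0) within X \<times> Y)"
    by (rule has_derivative_partialsI[OF fx fy cont]) (auto simp: Y_def \<rho>)
  then have d2: "((\<lambda>(x, y). f x y) has_derivative (\<lambda>(tx, ty). tx *\<^sub>R Wx z + ty *\<^sub>R Wy z)) (at (x0, y0))"
    using at_within_open[of "(x0, y0)" "X \<times> Y"] \<rho>
    by (simp add: X_def Y_def open_Times blinfun_scaleR_left.rep_eq x0_def y0_def)
  have dp: "((\<lambda>w. (Re w, Im w)) has_derivative (\<lambda>h. (Re h, Im h))) (at z)"
    by (auto intro!: derivative_eq_intros)
  have d2': "((\<lambda>(x, y). f x y) has_derivative (\<lambda>(tx, ty). tx *\<^sub>R Wx z + ty *\<^sub>R Wy z)) (at (Re z, Im z))"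
    using d2 by (simp add: x0_def y0_def)
  from has_derivative_compose[OF dp d2']
  show ?thesis by (simp add: f_def)
qed

lemma bmul_comm: "bmul X Y = bmul Y X"
  by (simp add: bmul_def algebra_simps)
lemma bmul_assoc: "bmul (bmul X Y) Z = bmul X (bmul Y Z)"
  by (simp add: bmul_def algebra_simps)

lemma bb_bmul: "bounded_bilinear bmul"
proof
  show "bmul (a + a') b = bmul a b + bmul a' b" for a a' b by (simp add: bmul_def algebra_simps)
  show "bmul a (b + b') = bmul a b + bmul a b'" for a b b' by (simp add: bmul_def algebra_simps)
  show "bmul (r *\<^sub>R a) b = r *\<^sub>R bmul a b" for r a b by (simp add: bmul_def scaleR_conv_of_real algebra_simps)
  show "bmul a (r *\<^sub>R b) = r *\<^sub>R bmul a b" for r a b by (simp add: bmul_def scaleR_conv_of_real algebra_simps)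
  show "\<exists>K. \<forall>a b. norm (bmul a b) \<le> norm a * norm b * K"
    using norm_bmul by (metis mult.commute mult.left_commute)
qed

lemma vekua_D:
  assumes "vekua_solution a b S W"
  obtains Wx Wy where "open S" "continuous_on S Wx" "continuous_on S Wy"
    "\<And>z. z \<in> S \<Longrightarrow> (W has_derivative (\<lambda>h. Re h *\<^sub>R Wx z + Im h *\<^sub>R Wy z)) (at z)"
    "\<And>z. z \<in> S \<Longrightarrow> (1/2::real) *\<^sub>R (Wx z + bmul bj (Wy z)) = bmul (a z) (W z) + bmul (b z) (bconj (W z))"
proof -
  from assms obtain Wx Wy where S: "open S" and c: "continuous_on S Wx" "continuous_on S Wy"
    and h: "\<forall>z\<in>S. ((\<lambda>t. W (z + complex_of_real t)) has_vector_derivative Wx z) (at 0) \<and>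
               ((\<lambda>t. W (z + \<i> * complex_of_real t)) has_vector_derivative Wy z) (at 0) \<and>
               (1/2::real) *\<^sub>R (Wx z + bmul bj (Wy z)) = bmul (a z) (W z) + bmul (b z) (bconj (W z))"
    unfolding vekua_solution_def by blast
  show ?thesis
  proof (rule that[OF S c])
    show "(W has_derivative (\<lambda>h. Re h *\<^sub>R Wx z + Im h *\<^sub>R Wy z)) (at z)" if "z \<in> S" for z
      by (rule partials_deriv[OF S that c(2)]) (use h that in auto)
  qed (use h in auto)
qed

lemma closed_alg:
  assumes eW: "(1/2::real) *\<^sub>R (Wx + bmul bj Wy) = bmul A W + bmul B (bconj W)"
    and eV: "(1/2::real) *\<^sub>R (Vx + bmul bj Vy) = bmul (- A) V + bmul (- bconj B) (bconj V)"
  shows "fst (bmul W Vx + bmul Wx V) = snd (bmul W Vy + bmul Wy V)"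
proof -
  obtain w1 w2 where W: "W = (w1, w2)" by fastforce
  obtain v1 v2 where V: "V = (v1, v2)" by fastforce
  obtain p1 p2 where Wx: "Wx = (p1, p2)" by fastforce
  obtain q1 q2 where Wy: "Wy = (q1, q2)" by fastforce
  obtain r1 r2 where Vx: "Vx = (r1, r2)" by fastforce
  obtain t1 t2 where Vy: "Vy = (t1, t2)" by fastforce
  obtain A1 A2 where A: "A = (A1, A2)" by fastforce
  obtain B1 B2 where B: "B = (B1, B2)" by fastforce
  from eW have h1: "p1 = q2 + 2 * (A1 * w1 - A2 * w2 + B1 * w1 + B2 * w2)"
    and h2: "p2 = - q1 + 2 * (A1 * w2 + A2 * w1 - B1 * w2 + B2 * w1)"
    unfolding W Wx Wy A B by (auto simp: bmul_def bconj_def bj_def scaleR_conv_of_real field_simps)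
  from eV have h3: "r1 = t2 + 2 * (-A1 * v1 + A2 * v2 - B1 * v1 + B2 * v2)"
    and h4: "r2 = - t1 + 2 * (-A1 * v2 - A2 * v1 + B1 * v2 + B2 * v1)"
    unfolding V Vx Vy A B by (auto simp: bmul_def bconj_def bj_def scaleR_conv_of_real field_simps)
  show ?thesis
    unfolding W V Wx Wy Vx Vy by (simp add: bmul_def h1 h2 h3 h4 algebra_simps)
qed

lemma decays_nonneg:
  assumes "\<forall>z. R \<le> cmod z \<longrightarrow> cmod z * bnorm (F z) \<le> M"
  shows "0 \<le> M"
proof -
  have "R \<le> cmod (complex_of_real \<bar>R\<bar>)" by simp
  with assms have "cmod (complex_of_real \<bar>R\<bar>) * bnorm (F (complex_of_real \<bar>R\<bar>)) \<le> M" by blast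
  moreover have "0 \<le> bnorm X" for X unfolding bnorm_def by simp
  ultimately show ?thesis by (smt (verit) mult_nonneg_nonneg norm_ge_zero)
qed

lemma kernel_pair:
  fixes W V :: "complex \<Rightarrow> bicomplex" and \<alpha> \<beta> :: bicomplex
  assumes sW: "vekua_solution a b (UNIV - {z1}) W"
    and sV: "vekua_solution (\<lambda>z. - a z) (\<lambda>z. - bconj (b z)) (UNIV - {z0}) V"
    and lW: "((\<lambda>p. bmul (pl (p - z1)) (W p)) \<longlongrightarrow> \<alpha>) (at z1)"
    and lV: "((\<lambda>p. bmul (pl (p - z0)) (V p)) \<longlongrightarrow> \<beta>) (at z0)"
    and dW: "decays_inv W" and dV: "decays_inv V"
    and ne: "z0 \<noteq> z1"
  shows "fst (bmul (W z0) \<beta>) + fst (bmul \<alpha> (V z1)) = 0"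
proof -
  obtain Wx Wy where oW: "open (UNIV - {z1})" and cWx: "continuous_on (UNIV - {z1}) Wx"
    and cWy: "continuous_on (UNIV - {z1}) Wy"
    and dWd: "\<And>z. z \<in> UNIV - {z1} \<Longrightarrow> (W has_derivative (\<lambda>h. Re h *\<^sub>R Wx z + Im h *\<^sub>R Wy z)) (at z)"
    and eW: "\<And>z. z \<in> UNIV - {z1} \<Longrightarrow> (1/2::real) *\<^sub>R (Wx z + bmul bj (Wy z)) = bmul (a z) (W z) + bmul (b z) (bconj (W z))"
    using vekua_D[OF sW] by blast
  obtain Vx Vy where oV: "open (UNIV - {z0})" and cVx: "continuous_on (UNIV - {z0}) Vx"
    and cVy: "continuous_on (UNIV - {z0}) Vy"
    and dVd: "\<And>z. z \<in> UNIV - {z0} \<Longrightarrow> (V has_derivative (\<lambda>h. Re h *\<^sub>R Vx z + Im h *\<^sub>R Vy z)) (at z)"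
    and eV: "\<And>z. z \<in> UNIV - {z0} \<Longrightarrow> (1/2::real) *\<^sub>R (Vx z + bmul bj (Vy z)) = bmul (- a z) (V z) + bmul (- bconj (b z)) (bconj (V z))"
    using vekua_D[OF sV] by blast
  have cW: "continuous_on (UNIV - {z1}) W"
    using dWd by (meson continuous_at_imp_continuous_on has_derivative_continuous)
  have cV: "continuous_on (UNIV - {z0}) V"
    using dVd by (meson continuous_at_imp_continuous_on has_derivative_continuous)
  define F where "F p = bmul (W p) (V p)" for p
  define Fx where "Fx p = bmul (W p) (Vx p) + bmul (Wx p) (V p)" for p
  define Fy where "Fy p = bmul (W p) (Vy p) + bmul (Wy p) (V p)" for p
  have sub: "- {z0, z1} \<subseteq> UNIV - {z1}" "- {z0, z1} \<subseteq> UNIV - {z0}" by auto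
  have dF: "(F has_derivative (\<lambda>h. Re h *\<^sub>R Fx z + Im h *\<^sub>R Fy z)) (at z)" if "z \<noteq> z0" "z \<noteq> z1" for z
  proof -
    have "(F has_derivative (\<lambda>h. bmul (W z) (Re h *\<^sub>R Vx z + Im h *\<^sub>R Vy z) + bmul (Re h *\<^sub>R Wx z + Im h *\<^sub>R Wy z) (V z))) (at z)"
      unfolding F_def using bounded_bilinear.FDERIV[OF bb_bmul dWd dVd] that by auto
    then show ?thesis
      by (rule has_derivative_eq_rhs)
         (simp add: fun_eq_iff Fx_def Fy_def bounded_bilinear.add_left[OF bb_bmul] bounded_bilinear.add_right[OF bb_bmul]
            bounded_bilinear.scaleR_left[OF bb_bmul] bounded_bilinear.scaleR_right[OF bb_bmul] algebra_simps)
  qed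
  have cFx: "continuous_on (- {z0, z1}) Fx"
    unfolding Fx_def
    by (intro continuous_on_add bounded_bilinear.continuous_on[OF bb_bmul]
        continuous_on_subset[OF cW sub(1)] continuous_on_subset[OF cV sub(2)]
        continuous_on_subset[OF cWx sub(1)] continuous_on_subset[OF cVx sub(2)])
  have cFy: "continuous_on (- {z0, z1}) Fy"
    unfolding Fy_def
    by (intro continuous_on_add bounded_bilinear.continuous_on[OF bb_bmul]
        continuous_on_subset[OF cW sub(1)] continuous_on_subset[OF cV sub(2)]
        continuous_on_subset[OF cWy sub(1)] continuous_on_subset[OF cVy sub(2)])
  have cl: "fst (Fx z) = snd (Fy z)" if "z \<noteq> z0" "z \<noteq> z1" for z
    unfolding Fx_def Fy_def by (rule closed_alg[OF eW eV]) (use that in auto)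
  have Wz0: "(W \<longlongrightarrow> W z0) (at z0)"
    using dWd[of z0] ne has_derivative_continuous continuous_at by blast
  have Vz1: "(V \<longlongrightarrow> V z1) (at z1)"
    using dVd[of z1] ne has_derivative_continuous continuous_at by blast
  have lim0: "((\<lambda>p. bmul (pl (p - z0)) (F p)) \<longlongrightarrow> bmul (W z0) \<beta>) (at z0)"
  proof -
    have "((\<lambda>p. bmul (W p) (bmul (pl (p - z0)) (V p))) \<longlongrightarrow> bmul (W z0) \<beta>) (at z0)"
      by (rule bounded_bilinear.tendsto[OF bb_bmul Wz0 lV])
    moreover have "bmul (W p) (bmul (pl (p - z0)) (V p)) = bmul (pl (p - z0)) (F p)" for p
      unfolding F_def by (metis bmul_assoc bmul_comm)
    ultimately show ?thesis by simp
  qed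
  have lim1: "((\<lambda>p. bmul (pl (p - z1)) (F p)) \<longlongrightarrow> bmul \<alpha> (V z1)) (at z1)"
  proof -
    have "((\<lambda>p. bmul (bmul (pl (p - z1)) (W p)) (V p)) \<longlongrightarrow> bmul \<alpha> (V z1)) (at z1)"
      by (rule bounded_bilinear.tendsto[OF bb_bmul lW Vz1])
    moreover have "bmul (bmul (pl (p - z1)) (W p)) (V p) = bmul (pl (p - z1)) (F p)" for p
      unfolding F_def by (metis bmul_assoc)
    ultimately show ?thesis by simp
  qed
  obtain R1 M1 where RM1: "\<forall>z. R1 \<le> cmod z \<longrightarrow> cmod z * bnorm (W z) \<le> M1"
    using dW unfolding decays_inv_def by blast
  obtain R2 M2 where RM2: "\<forall>z. R2 \<le> cmod z \<longrightarrow> cmod z * bnorm (V z) \<le> M2"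
    using dV unfolding decays_inv_def by blast
  have dec: "(cmod p)^2 * norm (F p) \<le> 16 * M1 * M2" if "max R1 R2 \<le> cmod p" for p
  proof -
    have "cmod p * bnorm (W p) \<le> M1" using RM1 that by auto
    moreover have "cmod p * norm (W p) \<le> cmod p * (2 * bnorm (W p))"
      by (rule mult_left_mono[OF norm_le_bnorm]) simp
    ultimately have b1: "cmod p * norm (W p) \<le> 2 * M1" by linarith
    have "cmod p * bnorm (V p) \<le> M2" using RM2 that by auto
    moreover have "cmod p * norm (V p) \<le> cmod p * (2 * bnorm (V p))"
      by (rule mult_left_mono[OF norm_le_bnorm]) simp
    ultimately have b2: "cmod p * norm (V p) \<le> 2 * M2" by linarith
    have "(cmod p)^2 * norm (F p) \<le> (cmod p)^2 * (4 * norm (W p) * norm (V p))"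
      unfolding F_def by (intro mult_left_mono norm_bmul) auto
    also have "\<dots> = 4 * ((cmod p * norm (W p)) * (cmod p * norm (V p)))"
      by (simp add: power2_eq_square algebra_simps)
    also have "\<dots> \<le> 4 * ((2 * M1) * (2 * M2))"
    proof -
      have M1: "0 \<le> M1" by (rule decays_nonneg[OF RM1])
      have "(cmod p * norm (W p)) * (cmod p * norm (V p)) \<le> (2 * M1) * (2 * M2)"
        by (rule mult_mono[OF b1 b2]) (use M1 in auto)
      then show ?thesis by (simp add: algebra_simps)
    qed
    finally show ?thesis by simp
  qed
  show ?thesis
    by (rule two_poles[OF dF cFx cFy cl lim0 lim1 dec ne])
qed

theorem mainTheorem4:
  fixes a b :: "complex \<Rightarrow> bicomplex"
    and Z Zh :: "bicomplex \<Rightarrow> complex \<Rightarrow> complex \<Rightarrow> bicomplex"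
  assumes "holder_continuous a" and "holder_continuous b"
    and "cauchy_kernel a b UNIV Z"
    and "cauchy_kernel (\<lambda>z. - a z) (\<lambda>z. - bconj (b z)) UNIV Zh"
    and "\<forall>z0. \<forall>\<alpha>\<in>{bone, bj}. decays_inv (Z \<alpha> z0)"
    and "\<forall>z0. \<forall>\<alpha>\<in>{bone, bj}. decays_inv (Zh \<alpha> z0)"
    and "z \<noteq> z0"
  shows "Zh bone z0 z = (- Sc (Z bone z z0), Sc (Z bj z z0)) \<and>
         Zh bj z0 z = (Vec (Z bone z z0), - Vec (Z bj z z0))"
proof -
  have key: "fst (bmul (Z \<alpha> z z0) \<beta>) + fst (bmul \<alpha> (Zh \<beta> z0 z)) = 0"
    if al: "\<alpha> \<in> {bone, bj}" and be: "\<beta> \<in> {bone, bj}" for \<alpha> \<beta>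
  proof (rule kernel_pair)
    show "vekua_solution a b (UNIV - {z}) (Z \<alpha> z)"
      using assms(3) al unfolding cauchy_kernel_def by blast
    show "((\<lambda>p. bmul (pl (p - z)) (Z \<alpha> z p)) \<longlongrightarrow> \<alpha>) (at z)"
      using assms(3) al unfolding cauchy_kernel_def by blast
    show "vekua_solution (\<lambda>z. - a z) (\<lambda>z. - bconj (b z)) (UNIV - {z0}) (Zh \<beta> z0)"
      using assms(4) be unfolding cauchy_kernel_def by blast
    show "((\<lambda>p. bmul (pl (p - z0)) (Zh \<beta> z0 p)) \<longlongrightarrow> \<beta>) (at z0)"
      using assms(4) be unfolding cauchy_kernel_def by blast
    show "decays_inv (Z \<alpha> z)" using assms(5) al by blast
    show "decays_inv (Zh \<beta> z0)" using assms(6) be by blast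
    show "z0 \<noteq> z" using assms(7) by simp
  qed
  have k1: "fst (bmul (Z bone z z0) bone) + fst (bmul bone (Zh bone z0 z)) = 0" by (rule key) auto
  have k2: "fst (bmul (Z bj z z0) bone) + fst (bmul bj (Zh bone z0 z)) = 0" by (rule key) auto
  have k3: "fst (bmul (Z bone z z0) bj) + fst (bmul bone (Zh bj z0 z)) = 0" by (rule key) auto
  have k4: "fst (bmul (Z bj z z0) bj) + fst (bmul bj (Zh bj z0 z)) = 0" by (rule key) auto
  show ?thesis
    using k1 k2 k3 k4
    by (auto simp: bmul_def bone_def bj_def Sc_def Vec_def prod_eq_iff add_eq_0_iff algebra_simps)
qed

end
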